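(* Assume (A1)–(A3) hold and let $\{x_k\}$ be the sequence generated by LMTR. Then $\{D_k\}$ is convergent and $\lim_{k\to\infty}D_k=\lim_{k\to\infty}\psi(x_k)$. Further, the algorithm either stops after finitely many iterations at an $x_k$ with $\|h(x_k)\|\le\varepsilon$ or $\|\nabla\psi(x_k)\|\le\varepsilon$, or generates an infinite sequence $\{x_k\}$ with $\lim_{k\to\infty}\|\nabla\psi(x_k)\|=0$, so that every accumulation point of $\{x_k\}$ is a stationary point of $\psi$.
   Context: Let $h:\mathbb{R}^m\to\mathbb{R}^n$ be continuously differentiable; $\nabla h(x)\in\mathbb{R}^{m\times n}$ denotes the transposed Jacobian, $\|\cdot\|$ the Euclidean norm (operator norm for matrices), $\psi(x):=\frac12\|h(x)\|^2$, $\nabla\psi(x)=\nabla h(x)h(x)$; $\Omega:=\{x:h(x)=0\}\ne\emptyset$; $\mathcal{L}(x_0):=\{x:\psi(x)\le\psi(x_0)\}$; $q_k(d):=\frac12\|\nabla h(x_k)^Td+h(x_k)\|^2$. Assumptions: (A1) for some $x^*\in\Omega$ there are $\delta\in\,]0,1]$, $\beta>0$, $\mathtt r\in\,]0,1[$ with $\beta\,\mathrm{dist}(x,\Omega)\le\|h(x)\|^\delta$ whenever $\|x-x^*\|\le\mathtt r$. (A2) $\mathcal{L}(x_0)$ is bounded. (A3) $\|\nabla h(x)-\nabla h(y)\|\le L\|x-y\|$ for all $x,y$. Algorithm LMTR: parameters $x_0$, $\varepsilon>0$, $\eta\in\,]0,4\delta[$, $0<\rho_2<1<\rho_1$, $0<\upsilon_1<\upsilon_2<1$,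 $\mu_{\min}>0$, $0\le\xi_{\min}\le\xi_{\max}$, $0\le\omega_{\min}\le\omega_{\max}$ with $\xi_{\min}+\omega_{\min}>0$, $0\le\theta_{\min}\le\theta_{\max}<1$, sequences $\xi_k\in[\xi_{\min},\xi_{\max}]$, $\omega_k\in[\omega_{\min},\omega_{\max}]$, $\theta_k\in[\theta_{\min},\theta_{\max}]$; $\lambda_0:=1$, $D_0:=\psi(x_0)$. At iteration $k$: stop if $\|h(x_k)\|\le\varepsilon$ or $\|\nabla\psi(x_k)\|\le\varepsilon$. Otherwise $\mu_k:=\xi_k\|h(x_k)\|^\eta+\omega_k\|\nabla h(x_k)h(x_k)\|^\eta$. For a value $\lambda>0$ set $\widehat\mu:=\max\{\mu_{\min},\lambda\mu_k\}$, let $d$ solve $(\nabla h(x_k)\nabla h(x_k)^T+\widehat\mu I)d=-\nabla h(x_k)h(x_k)$ and $\widehat r:=(D_k-\psi(x_k+d))/(q_k(0)-q_k(d))$. Starting from $\lambda=\lambda_k$, replace $\lambda$ by $\rho_1\lambda$ as long as $\widehat r<\upsilon_1$; $p_k$ is the number of replacements and $\widehat\mu_k,d_k,\widehat r_k$ the accepted values. Then $x_{k+1}:=x_k+d_k$, $\lambda_{k+1}:=\rho_2\rho_1^{p_k}\lambda_k$ if $\widehat r_k\ge\upsilon_2$, else $\lambda_{k+1}:=\rho_1^{p_k}\lambda_k$, and $D_{k+1}:=(1-\theta_k)\psi(x_{k+1})+\theta_kD_k$. *)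

theory Defs
  imports "HOL-Analysis.Analysis"
begin

text \<open>The transposed Jacobian nabla h(x) (an m x n matrix) is a matrix-valued function
  G :: real^'m \<Rightarrow> real^'n^'m, linked to h by
  (h has_derivative (\<lambda>d. transpose (G x) *v d)) (at x).\<close>

definition psi :: "('a::real_normed_vector \<Rightarrow> 'b::real_normed_vector) \<Rightarrow> 'a \<Rightarrow> real" where
  "psi h x = (1/2) * (norm (h x))^2"

definition grad_psi :: "(real^'m \<Rightarrow> real^'n^'m) \<Rightarrow> (real^'m \<Rightarrow> real^'n) \<Rightarrow> real^'m \<Rightarrow> real^'m" where
  "grad_psi G h x = G x *v h x"

definition qmodel :: "(real^'m \<Rightarrow> real^'n^'m) \<Rightarrow> (real^'m \<Rightarrow> real^'n) \<Rightarrow> real^'m \<Rightarrow> real^'m \<Rightarrow> real" where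
  "qmodel G h x d = (1/2) * (norm (transpose (G x) *v d + h x))^2"

text \<open>The solution d of (nabla h nabla h^T + mu I) d = - nabla h h (the matrix is
  positive definite for mu > 0, hence invertible).\<close>
definition lm_dir :: "(real^'m \<Rightarrow> real^'n^'m) \<Rightarrow> (real^'m \<Rightarrow> real^'n) \<Rightarrow> real^'m \<Rightarrow> real \<Rightarrow> real^'m" where
  "lm_dir G h x mu = matrix_inv (G x ** transpose (G x) + mu *\<^sub>R mat 1) *v (- (G x *v h x))"

definition lm_ratio :: "(real^'m \<Rightarrow> real^'n^'m) \<Rightarrow> (real^'m \<Rightarrow> real^'n) \<Rightarrow> real \<Rightarrow> real^'m \<Rightarrow> real^'m \<Rightarrow> real" where
  "lm_ratio G h D x d = (D - psi h (x + d)) / (qmodel G h x 0 - qmodel G h x d)"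

end

theory Submission
  imports Defs
begin

lemma inner_mv: fixes A :: "real^'n^'m"
  shows "inner v (A *v y) = inner (transpose A *v v) y"
  by (simp add: dot_lmul_matrix)

lemma M_mv: fixes A :: "real^'n^'m"
  shows "(A ** transpose A + \<mu> *\<^sub>R mat 1) *v v = A *v (transpose A *v v) + \<mu> *\<^sub>R v"
  by (simp add: matrix_vector_mult_add_rdistrib matrix_vector_mul_assoc[symmetric]
      flip: scaleR_matrix_vector_assoc)

lemma M_quad: fixes A :: "real^'n^'m"
  shows "inner v ((A ** transpose A + \<mu> *\<^sub>R mat 1) *v v) = (norm (transpose A *v v))^2 + \<mu> * (norm v)^2"
  unfolding M_mv by (simp add: inner_add_right inner_mv power2_norm_eq_inner)

lemma M_inv: fixes A :: "real^'n^'m"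
  assumes "\<mu> > 0"
  shows "(A ** transpose A + \<mu> *\<^sub>R mat 1) *v (matrix_inv (A ** transpose A + \<mu> *\<^sub>R mat 1) *v w) = w"
proof -
  let ?M = "A ** transpose A + \<mu> *\<^sub>R mat 1"
  have "\<forall>v. ?M *v v = 0 \<longrightarrow> v = 0"
  proof (intro allI impI)
    fix v assume "?M *v v = 0"
    then have "(norm (transpose A *v v))^2 + \<mu> * (norm v)^2 = 0" using M_quad[of v A \<mu>] by simp
    then have "\<mu> * (norm v)^2 \<le> 0" by (smt (verit) zero_le_power2)
    then show "v = 0" using assms by (simp add: mult_le_0_iff)
  qed
  then have "invertible ?M" using matrix_left_invertible_ker invertible_left_inverse by blast
  then have "?M ** matrix_inv ?M = mat 1" unfolding invertible_def matrix_inv_def by (rule someI_ex[THEN conjunct1])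
  then show ?thesis by (simp add: matrix_vector_mul_assoc)
qed

lemma step_eq:
  assumes "\<mu> > 0"
  shows "G x *v (transpose (G x) *v lm_dir G h x \<mu>) + \<mu> *\<^sub>R lm_dir G h x \<mu> = - grad_psi G h x"
  using M_inv[OF assms, of "G x" "- (G x *v h x)"] unfolding lm_dir_def grad_psi_def M_mv by simp

lemma step_props:
  fixes G :: "real^'m \<Rightarrow> real^'n^'m" and h :: "real^'m \<Rightarrow> real^'n" and x :: "real^'m"
  assumes mu: "\<mu> > 0"
  defines "d \<equiv> lm_dir G h x \<mu>" and "g \<equiv> grad_psi G h x" and "a \<equiv> transpose (G x) *v lm_dir G h x \<mu>"
  shows "qmodel G h x 0 - qmodel G h x d = (norm a)^2/2 + \<mu> * (norm d)^2"
    and "\<mu> * norm d \<le> norm g"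
    and "norm (a + h x) \<le> norm (h x)"
    and "(\<forall>v. norm (G x *v v) \<le> Ab * norm v) \<Longrightarrow> (norm g)^2 \<le> 2 * max (2*Ab^2) \<mu> * (qmodel G h x 0 - qmodel G h x d)"
proof -
  have E: "G x *v a + \<mu> *\<^sub>R d = - g" using step_eq[OF mu] unfolding a_def d_def g_def .
  have I1: "- inner d g = (norm a)^2 + \<mu> * (norm d)^2"
  proof -
    have "- inner d g = inner d (G x *v a + \<mu> *\<^sub>R d)" using E by simp
    also have "\<dots> = (norm a)^2 + \<mu> * (norm d)^2"
      by (simp add: inner_add_right inner_mv power2_norm_eq_inner a_def d_def)
    finally show ?thesis .
  qed
  have I2: "inner a (h x) = inner d g"
    by (simp add: a_def d_def g_def grad_psi_def inner_mv)
  have P: "qmodel G h x 0 - qmodel G h x d = (norm a)^2/2 + \<mu> * (norm d)^2"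
  proof -
    have "qmodel G h x d = (norm (a + h x))^2/2" by (simp add: qmodel_def a_def d_def)
    also have "\<dots> = ((norm a)^2 + 2 * inner a (h x) + (norm (h x))^2)/2"
      by (simp add: power2_norm_eq_inner inner_add_left inner_add_right inner_commute)
    finally have "qmodel G h x d = ((norm a)^2 + 2 * inner a (h x) + (norm (h x))^2)/2" .
    moreover have "qmodel G h x 0 = (norm (h x))^2/2" by (simp add: qmodel_def)
    ultimately show ?thesis using I1 I2 by (simp add: field_simps)
  qed
  then show "qmodel G h x 0 - qmodel G h x d = (norm a)^2/2 + \<mu> * (norm d)^2" .
  show "\<mu> * norm d \<le> norm g"
  proof (cases "d = 0")
    case True then show ?thesis by simp
  next
    case False
    have "\<mu> * (norm d)^2 \<le> norm d * norm g"
    proof -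
      have "\<mu> * (norm d)^2 \<le> - inner d g" using I1 zero_le_power2[of "norm a"] by linarith
      also have "\<dots> \<le> \<bar>inner d g\<bar>" by simp
      also have "\<dots> \<le> norm d * norm g" by (rule Cauchy_Schwarz_ineq2)
      finally show ?thesis .
    qed
    then show ?thesis using False by (simp add: power2_eq_square)
  qed
  show "norm (a + h x) \<le> norm (h x)"
  proof -
    have "0 \<le> (norm a)^2/2 + \<mu> * (norm d)^2" using mu by simp
    then have "qmodel G h x d \<le> qmodel G h x 0" using P by linarith
    then have "(norm (a + h x))^2 \<le> (norm (h x))^2"
      by (simp add: qmodel_def a_def d_def)
    then show ?thesis using power2_le_imp_le by fastforce
  qed
  assume Ab: "\<forall>v. norm (G x *v v) \<le> Ab * norm v"
  have "norm g \<le> Ab * norm a + \<mu> * norm d"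
  proof -
    have "norm g = norm (G x *v a + \<mu> *\<^sub>R d)" using E by (metis norm_minus_cancel)
    also have "\<dots> \<le> norm (G x *v a) + norm (\<mu> *\<^sub>R d)" by (rule norm_triangle_ineq)
    finally show ?thesis using Ab[rule_format, of a] mu by simp
  qed
  then have "(norm g)^2 \<le> (Ab * norm a + \<mu> * norm d)^2" by (simp add: power_mono)
  also have "\<dots> \<le> 2 * Ab^2 * (norm a)^2 + 2 * \<mu>^2 * (norm d)^2"
  proof -
    have "(Ab * norm a + \<mu> * norm d)^2 \<le> 2 * (Ab * norm a)^2 + 2 * (\<mu> * norm d)^2"
      using zero_le_power2[of "Ab * norm a - \<mu> * norm d"] by (simp add: power2_eq_square algebra_simps)
    then show ?thesis by (simp add: power_mult_distrib)
  qed
  also have "\<dots> \<le> 2 * max (2*Ab^2) \<mu> * ((norm a)^2/2 + \<mu> * (norm d)^2)"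
  proof -
    have "2 * Ab^2 * (norm a)^2 \<le> max (2*Ab^2) \<mu> * (norm a)^2" by (simp add: mult_right_mono)
    moreover have "2 * \<mu>^2 * (norm d)^2 \<le> 2 * max (2*Ab^2) \<mu> * \<mu> * (norm d)^2"
      using mu by (simp add: mult_right_mono power2_eq_square)
    ultimately show ?thesis by (simp add: algebra_simps)
  qed
  finally show "(norm g)^2 \<le> 2 * max (2*Ab^2) \<mu> * (qmodel G h x 0 - qmodel G h x d)" using P by simp
qed

lemma transpose_mv_bound: fixes M :: "real^'n^'m"
  shows "norm (transpose M *v v) \<le> onorm (\<lambda>w. M *v w) * norm v"
proof (cases "transpose M *v v = 0")
  case True then show ?thesis
    by (simp add: onorm_pos_le)
next
  case False
  let ?w = "transpose M *v v"
  have "(norm ?w)^2 = inner ?w ?w" by (simp add: power2_norm_eq_inner)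
  also have "\<dots> = inner v (M *v ?w)" by (simp only: inner_mv)
  also have "\<dots> \<le> norm v * norm (M *v ?w)" by (rule norm_cauchy_schwarz)
  also have "\<dots> \<le> norm v * (onorm (\<lambda>w. M *v w) * norm ?w)"
    by (rule mult_left_mono[OF onorm[OF matrix_vector_mul_bounded_linear]]) simp
  finally have "norm ?w * norm ?w \<le> (onorm (\<lambda>w. M *v w) * norm v) * norm ?w"
    by (simp add: power2_eq_square algebra_simps)
  then show ?thesis using False by simp
qed

lemma transpose_diff_mv: fixes P Q :: "real^'n^'m"
  shows "transpose P *v v - transpose Q *v v = transpose (P - Q) *v v"
  by (simp add: vec_eq_iff matrix_vector_mult_def transpose_def sum_subtractf algebra_simps)

lemma remainder:
  fixes h :: "real^'m \<Rightarrow> real^'n" and G :: "real^'m \<Rightarrow> real^'n^'m"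
  assumes deriv: "\<And>y. (h has_derivative (\<lambda>d. transpose (G y) *v d)) (at y)"
    and A3: "\<And>y z. onorm (\<lambda>v. (G y - G z) *v v) \<le> L * norm (y - z)"
  shows "norm (h (x + d) - h x - transpose (G x) *v d) \<le> \<bar>L\<bar> * (norm d)^2"
proof -
  let ?S = "closed_segment x (x + d)"
  let ?f = "\<lambda>y. h y - transpose (G x) *v y"
  let ?f' = "\<lambda>y v. transpose (G y) *v v - transpose (G x) *v v"
  have der: "(?f has_derivative ?f' y) (at y within ?S)" for y
    by (rule has_derivative_at_withinI, rule has_derivative_diff[OF deriv],
        rule bounded_linear.has_derivative[OF matrix_vector_mul_bounded_linear], rule has_derivative_ident)
  have B: "onorm (?f' y) \<le> \<bar>L\<bar> * norm d" if "y \<in> ?S" for y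
  proof (rule onorm_bound)
    show "0 \<le> \<bar>L\<bar> * norm d" by simp
    fix v
    have "norm (?f' y v) = norm (transpose (G y - G x) *v v)" by (simp only: transpose_diff_mv)
    also have "\<dots> \<le> onorm (\<lambda>w. (G y - G x) *v w) * norm v" by (rule transpose_mv_bound)
    also have "\<dots> \<le> (\<bar>L\<bar> * norm d) * norm v"
    proof (rule mult_right_mono)
      have "norm (y - x) \<le> norm d" using dist_in_closed_segment[OF that] by (simp add: dist_norm)
      then have "L * norm (y - x) \<le> \<bar>L\<bar> * norm d"
        by (smt (verit) abs_ge_self abs_ge_zero mult_left_mono mult_right_mono norm_ge_zero)
      then show "onorm (\<lambda>w. (G y - G x) *v w) \<le> \<bar>L\<bar> * norm d" using A3[of y x] by linarith
    qed simp
    finally show "norm (?f' y v) \<le> \<bar>L\<bar> * norm d * norm v" .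
  qed
  have "norm (?f (x + d) - ?f x) \<le> (\<bar>L\<bar> * norm d) * norm (x + d - x)"
    by (rule differentiable_bound[OF convex_closed_segment der B]) auto
  moreover have "?f (x + d) - ?f x = h (x + d) - h x - transpose (G x) *v d"
    by (simp add: matrix_vector_right_distrib algebra_simps)
  ultimately show ?thesis by (simp add: power2_eq_square algebra_simps)
qed

lemma ratio_good:
  fixes h :: "real^'m \<Rightarrow> real^'n" and G :: "real^'m \<Rightarrow> real^'n^'m"
  assumes deriv: "\<And>y. (h has_derivative (\<lambda>d. transpose (G y) *v d)) (at y)"
    and A3: "\<And>y z. onorm (\<lambda>v. (G y - G z) *v v) \<le> L * norm (y - z)"
    and mumin: "0 < \<mu>min" "\<mu>min \<le> \<mu>"
    and D: "psi h x \<le> D"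
    and H: "norm (h x) \<le> H" and Gb: "norm (grad_psi G h x) \<le> Gb"
    and u2: "\<upsilon>2 < 1"
    and big: "(H * \<bar>L\<bar> + L^2 * Gb^2 / \<mu>min^2 / 2) / (1 - \<upsilon>2) \<le> \<mu>"
    and dnz: "lm_dir G h x \<mu> \<noteq> 0"
  shows "\<upsilon>2 \<le> lm_ratio G h D x (lm_dir G h x \<mu>)"
proof -
  define d where "d = lm_dir G h x \<mu>"
  define a where "a = transpose (G x) *v d"
  define u where "u = a + h x"
  define R where "R = h (x + d) - h x - a"
  define pred where "pred = qmodel G h x 0 - qmodel G h x d"
  have mu: "0 < \<mu>" using mumin by linarith
  note SP = step_props[OF mu, where G=G and h=h and x=x, folded d_def, folded a_def]
  have pred_eq: "pred = (norm a)^2/2 + \<mu> * (norm d)^2" using SP(1) unfolding pred_def a_def d_def .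
  have dpos: "norm d > 0" using dnz d_def by simp
  have predpos: "pred \<ge> \<mu> * (norm d)^2" using pred_eq by simp
  have pp: "pred > 0" using predpos dpos mu by (smt (verit) mult_pos_pos zero_less_power)
  have uH: "norm u \<le> H" using SP(3) H unfolding u_def a_def d_def by linarith
  have Rb: "norm R \<le> \<bar>L\<bar> * (norm d)^2" using remainder[OF deriv A3, of x d] unfolding R_def a_def by simp
  have nd: "norm d \<le> Gb / \<mu>min"
  proof -
    have "\<mu>min * norm d \<le> \<mu> * norm d" using mumin by (simp add: mult_right_mono)
    also have "\<dots> \<le> Gb" using SP(2) Gb unfolding d_def by linarith
    finally show ?thesis using mumin by (simp add: field_simps)
  qed
  have nd2: "(norm d)^2 \<le> Gb^2 / \<mu>min^2"
    using power_mono[OF nd, of 2] by (simp add: power_divide)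
  have hxd: "h (x + d) = u + R" unfolding u_def R_def by simp
  have psi_le: "psi h (x + d) \<le> qmodel G h x d + norm u * norm R + (norm R)^2/2"
  proof -
    have "norm (u + R) \<le> norm u + norm R" by (rule norm_triangle_ineq)
    then have "(norm (u + R))^2 \<le> (norm u + norm R)^2" by (simp add: power_mono)
    moreover have "qmodel G h x d = (norm u)^2/2" by (simp add: qmodel_def u_def a_def)
    ultimately show ?thesis unfolding psi_def hxd by (simp add: power2_eq_square algebra_simps)
  qed
  have q0: "qmodel G h x 0 = psi h x" by (simp add: qmodel_def psi_def)
  have err: "norm u * norm R + (norm R)^2/2 \<le> (1 - \<upsilon>2) * pred"
  proof -
    have e1: "norm u * norm R \<le> H * (\<bar>L\<bar> * (norm d)^2)"
      using uH Rb by (simp add: mult_mono')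
    have "(norm R)^2 \<le> (\<bar>L\<bar> * (norm d)^2)^2" using Rb by (simp add: power_mono)
    also have "\<dots> = L^2 * (norm d)^2 * (norm d)^2" by (simp add: power2_eq_square)
    also have "\<dots> \<le> L^2 * (Gb^2 / \<mu>min^2) * (norm d)^2"
      by (rule mult_right_mono[OF mult_left_mono[OF nd2]]) auto
    finally have e2: "(norm R)^2 \<le> L^2 * (Gb^2 / \<mu>min^2) * (norm d)^2" .
    have "norm u * norm R + (norm R)^2/2 \<le> (H * \<bar>L\<bar> + L^2 * Gb^2 / \<mu>min^2 / 2) * (norm d)^2"
    proof -
      have "(H * \<bar>L\<bar> + L^2 * Gb^2 / \<mu>min^2 / 2) * (norm d)^2
          = H * (\<bar>L\<bar> * (norm d)^2) + (L^2 * (Gb^2 / \<mu>min^2) * (norm d)^2) / 2"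
        by (simp add: algebra_simps)
      moreover have "norm u * norm R + (norm R)^2/2 \<le> H * (\<bar>L\<bar> * (norm d)^2) + (L^2 * (Gb^2 / \<mu>min^2) * (norm d)^2) / 2"
        using e1 e2 by (intro add_mono divide_right_mono) auto
      ultimately show ?thesis by simp
    qed
    also have "\<dots> \<le> ((1 - \<upsilon>2) * \<mu>) * (norm d)^2"
    proof (rule mult_right_mono)
      show "H * \<bar>L\<bar> + L^2 * Gb^2 / \<mu>min^2 / 2 \<le> (1 - \<upsilon>2) * \<mu>"
        using big u2 by (simp add: pos_divide_le_eq mult.commute)
    qed simp
    also have "\<dots> \<le> (1 - \<upsilon>2) * pred" using predpos u2 by (simp add: mult_left_mono)
    finally show ?thesis .
  qed
  have "\<upsilon>2 * pred \<le> D - psi h (x + d)" using psi_le err q0 D unfolding pred_def by (simp add: algebra_simps)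
  then show ?thesis unfolding lm_ratio_def d_def[symmetric] pred_def[symmetric] using pp
    by (simp add: pos_le_divide_eq)
qed

theorem theorem4:
  fixes h :: "real^'m \<Rightarrow> real^'n" and G :: "real^'m \<Rightarrow> real^'n^'m"
    and xs :: "real^'m" and \<delta> \<beta> rr L :: real
    and x0 :: "real^'m" and \<epsilon> \<eta> \<rho>1 \<rho>2 \<upsilon>1 \<upsilon>2 \<mu>min :: real
    and \<xi>min \<xi>max \<omega>min \<omega>max \<theta>min \<theta>max :: real
    and \<xi> \<omega> \<theta> :: "nat \<Rightarrow> real"
    and x :: "nat \<Rightarrow> real^'m" and lam D :: "nat \<Rightarrow> real" and p :: "nat \<Rightarrow> nat"
  assumes deriv: "\<And>y. (h has_derivative (\<lambda>d. transpose (G y) *v d)) (at y)"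
    and G_cont: "continuous_on UNIV G"
    \<comment> \<open>(A1)\<close>
    and A1: "h xs = 0" "0 < \<delta>" "\<delta> \<le> 1" "0 < \<beta>" "0 < rr" "rr < 1"
       "\<And>y. norm (y - xs) \<le> rr \<Longrightarrow> \<beta> * infdist y {z. h z = 0} \<le> norm (h y) powr \<delta>"
    \<comment> \<open>(A2)\<close>
    and A2: "bounded {y. psi h y \<le> psi h x0}"
    \<comment> \<open>(A3)\<close>
    and A3: "\<And>y z. onorm (\<lambda>v. (G y - G z) *v v) \<le> L * norm (y - z)"
    \<comment> \<open>parameters\<close>
    and par: "0 < \<epsilon>" "0 < \<eta>" "\<eta> < 4 * \<delta>" "0 < \<rho>2" "\<rho>2 < 1" "1 < \<rho>1"
       "0 < \<upsilon>1" "\<upsilon>1 < \<upsilon>2" "\<upsilon>2 < 1" "0 < \<mu>min"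
       "0 \<le> \<xi>min" "\<xi>min \<le> \<xi>max" "0 \<le> \<omega>min" "\<omega>min \<le> \<omega>max" "0 < \<xi>min + \<omega>min"
       "0 \<le> \<theta>min" "\<theta>min \<le> \<theta>max" "\<theta>max < 1"
    and seqs: "\<And>k. \<xi>min \<le> \<xi> k \<and> \<xi> k \<le> \<xi>max"
       "\<And>k. \<omega>min \<le> \<omega> k \<and> \<omega> k \<le> \<omega>max"
       "\<And>k. \<theta>min \<le> \<theta> k \<and> \<theta> k \<le> \<theta>max"
    \<comment> \<open>the sequence generated by LMTR\<close>
    and init: "x 0 = x0" "lam 0 = 1" "D 0 = psi h x0"
    and inner: "\<And>k. (\<forall>j\<le>k. \<not> (norm (h (x j)) \<le> \<epsilon> \<or> norm (grad_psi G h (x j)) \<le> \<epsilon>)) \<Longrightarrow>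
       (let \<mu>k = \<xi> k * norm (h (x k)) powr \<eta> + \<omega> k * norm (grad_psi G h (x k)) powr \<eta>;
            dd = (\<lambda>l. lm_dir G h (x k) (max \<mu>min (l * \<mu>k)));
            rt = (\<lambda>l. lm_ratio G h (D k) (x k) (dd l));
            la = lam k * \<rho>1 ^ p k
        in (\<forall>j < p k. rt (lam k * \<rho>1 ^ j) < \<upsilon>1) \<and> \<upsilon>1 \<le> rt la
           \<and> x (Suc k) = x k + dd la
           \<and> lam (Suc k) = (if \<upsilon>2 \<le> rt la then \<rho>2 * \<rho>1 ^ p k * lam k else \<rho>1 ^ p k * lam k)
           \<and> D (Suc k) = (1 - \<theta> k) * psi h (x (Suc k)) + \<theta> k * D k)"
  shows "(\<exists>K. (norm (h (x K)) \<le> \<epsilon> \<or> norm (grad_psi G h (x K)) \<le> \<epsilon>)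
              \<and> (\<forall>j<K. \<not> (norm (h (x j)) \<le> \<epsilon> \<or> norm (grad_psi G h (x j)) \<le> \<epsilon>)))
       \<or> ((\<forall>k. \<not> (norm (h (x k)) \<le> \<epsilon> \<or> norm (grad_psi G h (x k)) \<le> \<epsilon>))
          \<and> (\<exists>c. D \<longlonglongrightarrow> c \<and> (\<lambda>k. psi h (x k)) \<longlonglongrightarrow> c)
          \<and> (\<lambda>k. norm (grad_psi G h (x k))) \<longlonglongrightarrow> 0
          \<and> (\<forall>z r. strict_mono r \<and> (x \<circ> r) \<longlonglongrightarrow> z \<longrightarrow> grad_psi G h z = 0))"
proof -
  let ?stop = "\<lambda>k. norm (h (x k)) \<le> \<epsilon> \<or> norm (grad_psi G h (x k)) \<le> \<epsilon>"
  show ?thesis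
  proof (cases "\<exists>K. ?stop K")
    case True
    define K where "K = (LEAST K. ?stop K)"
    have "?stop K" unfolding K_def using True by (rule LeastI_ex)
    moreover have "\<forall>j<K. \<not> ?stop j" unfolding K_def using not_less_Least by blast
    ultimately show ?thesis by blast
  next
    case False
    then have NS: "\<And>k. \<not> ?stop k" by blast
    have hgt: "norm (h (x k)) > \<epsilon>" and ggt: "norm (grad_psi G h (x k)) > \<epsilon>" for k
      using NS[of k] by auto
    define \<mu>k where "\<mu>k k = \<xi> k * norm (h (x k)) powr \<eta> + \<omega> k * norm (grad_psi G h (x k)) powr \<eta>" for k
    define lh where "lh k = lam k * \<rho>1 ^ p k" for k
    define mu where "mu k = max \<mu>min (lh k * \<mu>k k)" for k
    define d where "d k = lm_dir G h (x k) (mu k)" for k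
    define rt where "rt k = lm_ratio G h (D k) (x k) (d k)" for k
    define pred where "pred k = qmodel G h (x k) 0 - qmodel G h (x k) (d k)" for k
    have step: "(\<forall>j < p k. lm_ratio G h (D k) (x k) (lm_dir G h (x k) (max \<mu>min (lam k * \<rho>1 ^ j * \<mu>k k))) < \<upsilon>1)
       \<and> \<upsilon>1 \<le> rt k \<and> x (Suc k) = x k + d k
       \<and> lam (Suc k) = (if \<upsilon>2 \<le> rt k then \<rho>2 * lh k else lh k)
       \<and> D (Suc k) = (1 - \<theta> k) * psi h (x (Suc k)) + \<theta> k * D k" for k
    proof -
      have "\<forall>j\<le>k. \<not> ?stop j" using NS by blast
      from inner[OF this] show ?thesis
        unfolding Let_def \<mu>k_def[symmetric] lh_def[symmetric] mu_def[symmetric] d_def[symmetric] rt_def[symmetric]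
        by (simp add: lh_def mult_ac)
    qed
    have mupos: "mu k \<ge> \<mu>min" for k unfolding mu_def by simp
    have mu0: "mu k > 0" for k using mupos[of k] par(10) by linarith
    have gnz: "grad_psi G h (x k) \<noteq> 0" for k using ggt[of k] par(1) by auto
    have dnz_gen: "lm_dir G h (x k) m \<noteq> 0" if "m > 0" for k m
    proof
      assume "lm_dir G h (x k) m = 0"
      then have "- grad_psi G h (x k) = 0" using step_eq[OF that, of G "x k" h] by simp
      then show False using gnz[of k] by simp
    qed
    have dnz: "d k \<noteq> 0" for k unfolding d_def using dnz_gen mu0 by blast
    have pred_eq: "pred k = (norm (transpose (G (x k)) *v d k))^2/2 + mu k * (norm (d k))^2" for k
      using step_props(1)[OF mu0[of k], where G=G and h=h and x="x k"] unfolding pred_def d_def .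
    have predpos: "pred k > 0" for k
    proof -
      have "norm (d k) > 0" using dnz[of k] by simp
      then have "mu k * (norm (d k))^2 > 0" using mu0[of k] by simp
      then show ?thesis using pred_eq[of k] by (smt (verit) zero_le_power2 divide_nonneg_pos)
    qed
    have th: "0 \<le> \<theta> k" "\<theta> k \<le> \<theta>max" for k using seqs(3)[of k] par(16) by auto
    have decr1: "D k - psi h (x (Suc k)) \<ge> \<upsilon>1 * pred k" for k
    proof -
      have "\<upsilon>1 \<le> (D k - psi h (x (Suc k))) / pred k"
        using step[of k] unfolding rt_def lm_ratio_def pred_def by simp
      then show ?thesis using predpos[of k] by (simp add: pos_le_divide_eq)
    qed
    have decr: "D (Suc k) \<le> D k - (1 - \<theta>max) * \<upsilon>1 * pred k" for k
    proof -
      have e: "D (Suc k) = (1 - \<theta> k) * psi h (x (Suc k)) + \<theta> k * D k" using step[of k] by blast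
      have "D (Suc k) - D k = (1 - \<theta> k) * (psi h (x (Suc k)) - D k)" unfolding e by (simp add: algebra_simps)
      also have "\<dots> \<le> (1 - \<theta> k) * (- (\<upsilon>1 * pred k))"
        using decr1[of k] th[of k] par(18) by (intro mult_left_mono) auto
      also have "\<dots> \<le> (1 - \<theta>max) * (- (\<upsilon>1 * pred k))"
        using th[of k] predpos[of k] par(7) by (intro mult_right_mono_neg) auto
      finally show ?thesis by (simp add: algebra_simps)
    qed
    have psiD: "psi h (x k) \<le> D k" for k
    proof (cases k)
      case 0 then show ?thesis using init by simp
    next
      case (Suc j)
      have "psi h (x (Suc j)) \<le> D j" using decr1[of j] predpos[of j] par(7)
        by (smt (verit) mult_pos_pos)
      moreover have e: "D (Suc j) = (1 - \<theta> j) * psi h (x (Suc j)) + \<theta> j * D j" using step[of j] by blast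
      moreover have "D (Suc j) - psi h (x (Suc j)) = \<theta> j * (D j - psi h (x (Suc j)))"
        unfolding e by (simp add: algebra_simps)
      ultimately have "psi h (x (Suc j)) \<le> D (Suc j)" using th[of j]
        by (metis diff_ge_0_iff_ge mult_nonneg_nonneg)
      then show ?thesis using Suc by simp
    qed
    have Dmono: "D k \<le> D 0" for k
    proof (induction k)
      case (Suc k) then show ?case using decr[of k] predpos[of k] par(7) par(18)
        by (smt (verit) mult_pos_pos)
    qed simp
    have psile: "psi h (x k) \<le> psi h x0" for k using psiD[of k] Dmono[of k] init by simp
    define H where "H = norm (h x0)"
    have hH: "norm (h (x k)) \<le> H" for k
      using psile[of k] unfolding psi_def H_def by (simp add: power_mono_iff)
    obtain b where b: "\<forall>y\<in>{y. psi h y \<le> psi h x0}. norm y \<le> b" using A2 bounded_iff by blast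
    define R where "R = b + norm xs"
    have xR: "norm (x k - xs) \<le> R" for k
      using b psile[of k] norm_triangle_ineq4[of "x k" xs] unfolding R_def by force
    define Ab where "Ab = onorm (\<lambda>v. G xs *v v) + \<bar>L\<bar> * R"
    have GAb: "norm (G (x k) *v v) \<le> Ab * norm v" for k v
    proof -
      have "G (x k) *v v = G xs *v v + (G (x k) - G xs) *v v" by (simp add: algebra_simps)
      then have "norm (G (x k) *v v) \<le> norm (G xs *v v) + norm ((G (x k) - G xs) *v v)"
        by (metis norm_triangle_ineq)
      also have "\<dots> \<le> onorm (\<lambda>v. G xs *v v) * norm v + onorm (\<lambda>v. (G (x k) - G xs) *v v) * norm v"
        by (intro add_mono onorm) auto
      also have "onorm (\<lambda>v. (G (x k) - G xs) *v v) \<le> \<bar>L\<bar> * R"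
      proof -
        have "L * norm (x k - xs) \<le> \<bar>L\<bar> * R"
          using xR[of k] by (smt (verit) abs_ge_self abs_ge_zero mult_left_mono mult_right_mono norm_ge_zero)
        then show ?thesis using A3[of "x k" xs] by linarith
      qed
      then have o1: "onorm (\<lambda>v. (G (x k) - G xs) *v v) * norm v \<le> (\<bar>L\<bar> * R) * norm v"
        by (rule mult_right_mono) simp
      have o2: "Ab * norm v = onorm (\<lambda>v. G xs *v v) * norm v + (\<bar>L\<bar> * R) * norm v"
        unfolding Ab_def by (rule distrib_right)
      have "onorm (\<lambda>v. G xs *v v) * norm v + onorm (\<lambda>v. (G (x k) - G xs) *v v) * norm v
          \<le> Ab * norm v" using o1 o2 by linarith
      finally show ?thesis .
    qed
    define Gb where "Gb = \<bar>Ab\<bar> * H"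
    have gGb: "norm (grad_psi G h (x k)) \<le> Gb" for k
    proof -
      have "norm (grad_psi G h (x k)) \<le> Ab * norm (h (x k))" unfolding grad_psi_def by (rule GAb)
      also have "\<dots> \<le> \<bar>Ab\<bar> * H" using hH[of k] by (smt (verit) abs_ge_self abs_ge_zero mult_left_mono mult_right_mono norm_ge_zero)
      finally show ?thesis unfolding Gb_def .
    qed
    define \<mu>bar where "\<mu>bar = \<xi>max * H powr \<eta> + \<omega>max * Gb powr \<eta>"
    define \<mu>low where "\<mu>low = (\<xi>min + \<omega>min) * \<epsilon> powr \<eta>"
    have xi: "0 \<le> \<xi> k" "\<xi> k \<le> \<xi>max" "\<xi>min \<le> \<xi> k" for k using seqs(1)[of k] par(11) by auto
    have om: "0 \<le> \<omega> k" "\<omega> k \<le> \<omega>max" "\<omega>min \<le> \<omega> k" for k using seqs(2)[of k] par(13) by auto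
    have mukle: "\<mu>k k \<le> \<mu>bar" for k
    proof -
      have "\<xi> k * norm (h (x k)) powr \<eta> \<le> \<xi>max * H powr \<eta>"
        using xi[of k] hH[of k] par(2) by (intro mult_mono powr_mono2) auto
      moreover have "\<omega> k * norm (grad_psi G h (x k)) powr \<eta> \<le> \<omega>max * Gb powr \<eta>"
        using om[of k] gGb[of k] par(2) by (intro mult_mono powr_mono2) auto
      ultimately show ?thesis unfolding \<mu>k_def \<mu>bar_def by linarith
    qed
    have mukge: "\<mu>low \<le> \<mu>k k" for k
    proof -
      have "\<xi>min * \<epsilon> powr \<eta> \<le> \<xi> k * norm (h (x k)) powr \<eta>"
        using xi[of k] hgt[of k] par(2) par(1) by (intro mult_mono powr_mono2) auto
      moreover have "\<omega>min * \<epsilon> powr \<eta> \<le> \<omega> k * norm (grad_psi G h (x k)) powr \<eta>"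
        using om[of k] ggt[of k] par(2) par(1) by (intro mult_mono powr_mono2) auto
      ultimately show ?thesis unfolding \<mu>k_def \<mu>low_def by (simp add: algebra_simps)
    qed
    have mulowpos: "\<mu>low > 0" unfolding \<mu>low_def using par(15) par(1) by simp
    define M where "M = (H * \<bar>L\<bar> + L^2 * Gb^2 / \<mu>min^2 / 2) / (1 - \<upsilon>2)"
    define \<Lambda> where "\<Lambda> = \<bar>M\<bar> / \<mu>low"
    have Lpos: "\<Lambda> \<ge> 0" unfolding \<Lambda>_def using mulowpos by simp
    have good: "\<upsilon>2 \<le> lm_ratio G h (D k) (x k) (lm_dir G h (x k) (max \<mu>min (l * \<mu>k k)))" if "\<Lambda> \<le> l" for k l
    proof (rule ratio_good[OF deriv A3 par(10) _ psiD hH gGb par(9)])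
      show "\<mu>min \<le> max \<mu>min (l * \<mu>k k)" by simp
      have "\<bar>M\<bar> = \<Lambda> * \<mu>low" unfolding \<Lambda>_def using mulowpos by simp
      also have "\<dots> \<le> l * \<mu>k k" using that Lpos mukge[of k] mulowpos by (intro mult_mono) auto
      finally show "(H * \<bar>L\<bar> + L\<^sup>2 * Gb\<^sup>2 / \<mu>min\<^sup>2 / 2) / (1 - \<upsilon>2) \<le> max \<mu>min (l * \<mu>k k)"
        unfolding M_def[symmetric] by linarith
      show "lm_dir G h (x k) (max \<mu>min (l * \<mu>k k)) \<noteq> 0" using dnz_gen par(10) by simp
    qed
    have lhle: "lh k \<le> max (lam k) (\<rho>1 * \<Lambda>)" for k
    proof (cases "p k")
      case 0 then show ?thesis unfolding lh_def by simp
    next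
      case (Suc j)
      have "lam k * \<rho>1 ^ j < \<Lambda>"
      proof (rule ccontr)
        assume "\<not> lam k * \<rho>1 ^ j < \<Lambda>"
        then have "\<upsilon>2 \<le> lm_ratio G h (D k) (x k) (lm_dir G h (x k) (max \<mu>min (lam k * \<rho>1 ^ j * \<mu>k k)))"
          by (intro good) simp
        moreover have "lm_ratio G h (D k) (x k) (lm_dir G h (x k) (max \<mu>min (lam k * \<rho>1 ^ j * \<mu>k k))) < \<upsilon>1"
          using step[of k] Suc by simp
        ultimately show False using par(8) by simp
      qed
      then have "\<rho>1 * (lam k * \<rho>1 ^ j) \<le> \<rho>1 * \<Lambda>" using par(6) by simp
      then show ?thesis unfolding lh_def Suc by (simp add: mult_ac)
    qed
    have lamstep: "lam (Suc k) \<le> max (lam k) (\<rho>1 * \<Lambda>)" for k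
    proof (cases "\<upsilon>2 \<le> rt k")
      case True
      have "\<rho>2 * lh k \<le> max (lam k) (\<rho>1 * \<Lambda>)"
      proof (cases "lh k \<ge> 0")
        case True
        then have "\<rho>2 * lh k \<le> lh k" using par(5) mult_right_mono[of "\<rho>2" 1 "lh k"] by simp
        then show ?thesis using lhle[of k] by linarith
      next
        case False
        then have "\<rho>2 * lh k \<le> 0" using par(4) by (simp add: mult_nonneg_nonpos)
        moreover have "0 \<le> \<rho>1 * \<Lambda>" using Lpos par(6) by simp
        ultimately show ?thesis by linarith
      qed
      then show ?thesis using step[of k] True by simp
    next
      case False
      have "lh k < \<Lambda>"
      proof (rule ccontr)
        assume "\<not> lh k < \<Lambda>"
        then have "\<upsilon>2 \<le> rt k" unfolding rt_def d_def mu_def by (intro good) simp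
        then show False using False by simp
      qed
      moreover have "\<Lambda> \<le> \<rho>1 * \<Lambda>" using Lpos par(6) mult_right_mono[of 1 "\<rho>1" "\<Lambda>"] by simp
      ultimately show ?thesis using step[of k] False by simp
    qed
    define B where "B = max 1 (\<rho>1 * \<Lambda>)"
    have lamB: "lam k \<le> B" for k
    proof (induction k)
      case 0 then show ?case using init unfolding B_def by simp
    next
      case (Suc k) then show ?case using lamstep[of k] unfolding B_def by simp
    qed
    define Mu where "Mu = max \<mu>min (B * \<mu>bar)"
    have muMu: "mu k \<le> Mu" for k
    proof -
      have "lh k \<le> B" using lhle[of k] lamB[of k] unfolding B_def by simp
      have mk0: "0 \<le> \<mu>k k" using mukge[of k] mulowpos by simp
      have "lh k * \<mu>k k \<le> B * \<mu>k k" using \<open>lh k \<le> B\<close> mk0 by (rule mult_right_mono)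
      also have "\<dots> \<le> B * \<mu>bar" using mukle[of k] unfolding B_def by (intro mult_left_mono) auto
      finally show ?thesis unfolding mu_def Mu_def by simp
    qed
    define c where "c = \<epsilon>^2 / (2 * max (2*Ab^2) Mu)"
    have Mupos: "max (2*Ab^2) Mu > 0" unfolding Mu_def using par(10) by simp
    have predc: "c \<le> pred k" for k
    proof -
      have "\<epsilon>^2 \<le> (norm (grad_psi G h (x k)))^2" using ggt[of k] par(1) by (simp add: power_mono)
      also have "\<dots> \<le> 2 * max (2*Ab^2) (mu k) * pred k"
        using step_props(4)[OF mu0[of k], where G=G and h=h and x="x k" and Ab=Ab] GAb
        unfolding pred_def d_def by blast
      also have "\<dots> \<le> 2 * max (2*Ab^2) Mu * pred k"
        using muMu[of k] predpos[of k] by (intro mult_right_mono) auto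
      finally show ?thesis unfolding c_def using Mupos by (simp add: pos_divide_le_eq mult.commute)
    qed
    define \<delta>' where "\<delta>' = (1 - \<theta>max) * \<upsilon>1 * c"
    have dpos: "\<delta>' > 0" unfolding \<delta>'_def c_def using par(18) par(7) par(1) Mupos by simp
    have Dlin: "D k \<le> D 0 - real k * \<delta>'" for k
    proof (induction k)
      case (Suc k)
      have "(1 - \<theta>max) * \<upsilon>1 * c \<le> (1 - \<theta>max) * \<upsilon>1 * pred k"
        using predc[of k] par(18) par(7) by (intro mult_left_mono) auto
      then show ?case using Suc decr[of k] unfolding \<delta>'_def by (simp add: algebra_simps)
    qed simp
    obtain n where n: "D 0 / \<delta>' < real n" using reals_Archimedean2 by blast
    have "0 \<le> psi h (x n)" unfolding psi_def by simp
    then have "0 \<le> D 0 - real n * \<delta>'" using psiD[of n] Dlin[of n] by linarith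
    moreover have "D 0 < real n * \<delta>'" using n dpos by (simp add: pos_divide_less_eq)
    ultimately have False by linarith
    then show ?thesis by blast
  qed
qed
end
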